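(* In the induced continuum market $\widehat\Gamma$, let $M$ be a stable pseudo-matching and let $M'$ be obtained from $M$ by a type-1, type-2, or type-3 stable transformation. Then $M'$ is a stable pseudo-matching.
   Context: Finite firms $F$, finite workers $W=\{w_1,\dots,w_n\}$, null firm $\o$, $\widetilde F=F\cup\{\o\}$; each worker $w$ has a strict complete transitive preference $\succ_w$ over $\widetilde F$ ($f\succeq_w f'$ means $f\succ_w f'$ or $f=f'$); each firm $f\in F$ has a strict complete transitive preference $\succ_f$ over $2^W$, subsets identified with indicator vectors. For $f\in F$ list the sets $S\succ_f\emptyset$ as $\mathbf u^1\succ_f\cdots\succ_f\mathbf u^L$. For $\mathbf x\in[0,1]^W$ the procedure computing $\widehat{Ch}_f(\mathbf x)$ is: $t_0=0$, $\mathbf z^0=\mathbf x$, $t_k=\min\{1-\sum_{j<k}t_j,\ z^{k-1}_i: u^k_i\ne 0\}$, $\mathbf z^k=\mathbf z^{k-1}-t_k\mathbf u^k$ for $k=1,\dots,L$, and $\widehat{Ch}_f(\mathbf x)=\sum_k t_k\mathbf u^k$; $\widehat{Ch}_{\o}(\mathbf x)=\mathbf x$. A pseudo-matching is $M=(M_f)_{f\in\widetilde F}$ with each $M_f\in[0,1]^W$. For vectors, $\vee$ is componentwise max and $\le$ componentwise. Write $M'_f\succ_f M_f$ if $M'_f=\widehat{Ch}_f(M'_f\vee M_f)$ and $M'_f\neq M_f$. Let $A^{\preceq f}(M)(w)=\sum_{f'\in\widetilde F:f\succeq_w f'}M_{f'}(w)$. $M$ is stable if (i) $M_f=\widehat{Ch}_f(M_f)$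 for each $f\in F$ and $M_f(w)=0$ whenever $\o\succ_w f$; (ii) there are no $f\in F$, $M''\in[0,1]^W$ with $M''\succ_f M_f$ and $M''\le A^{\preceq f}(M)$. Stable transformations of $M$ into $M'$: Type-1: choose $f'\in F$ such that $\sum_{j=1}^L t_j<1$ in the procedure computing $\widehat{Ch}_{f'}(M_{f'})$; set $M'_{f'}=\mathbf 0$ and $M'_f=M_f$ for $f\ne f'$. Type-2: choose $f'\in F$ and an index $k$ with $t_k>0$ in the procedure computing $\widehat{Ch}_{f'}(M_{f'})$; set $M'_{f'}=\mathbf u^k$ (for $f'$'s list) and $M'_f=M_f$ for $f\neq f'$. Type-3: choose $w'\in W$ with $M_{\o}(w')\in(0,1)$; set $M'_{\o}(w')\in\{0,1\}$, $M'_{\o}(w)=M_{\o}(w)$ for $w\ne w'$, and $M'_f=M_f$ for $f\in F$. *)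

theory Defs
  imports Complex_Main
begin

(* Workers: the finite type 'w (W = UNIV).  Firms: the finite type 'f (F = UNIV).
   Extended firm set F~ = F \<union> {null}: the type 'f option, with None the null firm. *)

definition strict_lin :: "('a \<Rightarrow> 'a \<Rightarrow> bool) \<Rightarrow> bool" where
  "strict_lin R \<longleftrightarrow> (\<forall>x. \<not> R x x) \<and> (\<forall>x y z. R x y \<longrightarrow> R y z \<longrightarrow> R x z)
      \<and> (\<forall>x y. x \<noteq> y \<longrightarrow> R x y \<or> R y x)"

definition ind :: "'w set \<Rightarrow> 'w \<Rightarrow> real" where
  "ind S = (\<lambda>i. if i \<in> S then 1 else 0)"

(* the list u^1 \<succ>_f ... \<succ>_f u^L of sets S with S \<succ>_f {} (pf f S T means S \<succ>_f T) *)
definition acc_list :: "('f \<Rightarrow> 'w set \<Rightarrow> 'w set \<Rightarrow> bool) \<Rightarrow> 'f \<Rightarrow> 'w set list" where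
  "acc_list pf f = (THE us. distinct us \<and> set us = {S. pf f S {}} \<and> sorted_wrt (pf f) us)"

(* the procedure: r = remaining budget 1 - \<Sum>_{j<k} t_j, z = z^{k-1};
   returns the list [t_1, ..., t_L] *)
fun tlist :: "real \<Rightarrow> ('w::finite \<Rightarrow> real) \<Rightarrow> 'w set list \<Rightarrow> real list" where
  "tlist r z [] = []"
| "tlist r z (u # us) =
     (let t = Min (insert r {z i | i. ind u i \<noteq> 0})
      in t # tlist (r - t) (\<lambda>i. z i - t * ind u i) us)"

definition ts :: "('f \<Rightarrow> 'w set \<Rightarrow> 'w set \<Rightarrow> bool) \<Rightarrow> 'f \<Rightarrow> ('w::finite \<Rightarrow> real) \<Rightarrow> real list" where
  "ts pf f x = tlist 1 x (acc_list pf f)"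

definition Chhat :: "('f \<Rightarrow> 'w set \<Rightarrow> 'w set \<Rightarrow> bool) \<Rightarrow> 'f \<Rightarrow> ('w::finite \<Rightarrow> real) \<Rightarrow> ('w \<Rightarrow> real)" where
  "Chhat pf f x = (\<lambda>i. \<Sum>k<length (acc_list pf f). ts pf f x ! k * ind (acc_list pf f ! k) i)"

definition unit_vec :: "('w \<Rightarrow> real) \<Rightarrow> bool" where
  "unit_vec x \<longleftrightarrow> (\<forall>i. 0 \<le> x i \<and> x i \<le> 1)"

definition pseudo_matching :: "('f option \<Rightarrow> 'w \<Rightarrow> real) \<Rightarrow> bool" where
  "pseudo_matching M \<longleftrightarrow> (\<forall>f. unit_vec (M f))"

definition firm_prefers :: "('f \<Rightarrow> 'w set \<Rightarrow> 'w set \<Rightarrow> bool) \<Rightarrow> 'f \<Rightarrow> ('w::finite \<Rightarrow> real) \<Rightarrow> ('w \<Rightarrow> real) \<Rightarrow> bool" where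
  "firm_prefers pf f M'' Mf \<longleftrightarrow> M'' = Chhat pf f (\<lambda>i. max (M'' i) (Mf i)) \<and> M'' \<noteq> Mf"

(* A^{\<preceq> f}(M)(w); pw w a b means a \<succ>_w b *)
definition Aprec :: "('w \<Rightarrow> 'f::finite option \<Rightarrow> 'f option \<Rightarrow> bool) \<Rightarrow> ('f option \<Rightarrow> 'w \<Rightarrow> real) \<Rightarrow> 'f option \<Rightarrow> 'w \<Rightarrow> real" where
  "Aprec pw M f w = (\<Sum>f'\<in>{f'.  pw w f f' \<or> f = f'}. M f' w)"

definition stable :: "('w \<Rightarrow> 'f option \<Rightarrow> 'f option \<Rightarrow> bool) \<Rightarrow> ('f \<Rightarrow> 'w set \<Rightarrow> 'w set \<Rightarrow> bool)
     \<Rightarrow> ('f::finite option \<Rightarrow> 'w::finite \<Rightarrow> real) \<Rightarrow> bool" where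
  "stable pw pf M \<longleftrightarrow> pseudo_matching M
     \<and> (\<forall>f. M (Some f) = Chhat pf f (M (Some f)) \<and> (\<forall>w. pw w None (Some f) \<longrightarrow> M (Some f) w = 0))
     \<and> \<not> (\<exists>f M''. unit_vec M'' \<and> firm_prefers pf f M'' (M (Some f))
                 \<and> (\<forall>w. M'' w \<le> Aprec pw M (Some f) w))"

definition type1 :: "('f \<Rightarrow> 'w set \<Rightarrow> 'w set \<Rightarrow> bool) \<Rightarrow> ('f option \<Rightarrow> 'w::finite \<Rightarrow> real) \<Rightarrow> ('f option \<Rightarrow> 'w \<Rightarrow> real) \<Rightarrow> bool" where
  "type1 pf M M' \<longleftrightarrow> (\<exists>f'. sum_list (ts pf f' (M (Some f'))) < 1 \<and> M' = M(Some f' := (\<lambda>_. 0)))"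

definition type2 :: "('f \<Rightarrow> 'w set \<Rightarrow> 'w set \<Rightarrow> bool) \<Rightarrow> ('f option \<Rightarrow> 'w::finite \<Rightarrow> real) \<Rightarrow> ('f option \<Rightarrow> 'w \<Rightarrow> real) \<Rightarrow> bool" where
  "type2 pf M M' \<longleftrightarrow> (\<exists>f' k. k < length (acc_list pf f') \<and> ts pf f' (M (Some f')) ! k > 0
       \<and> M' = M(Some f' := ind (acc_list pf f' ! k)))"

definition type3 :: "('f option \<Rightarrow> 'w \<Rightarrow> real) \<Rightarrow> ('f option \<Rightarrow> 'w \<Rightarrow> real) \<Rightarrow> bool" where
  "type3 M M' \<longleftrightarrow> (\<exists>w' v. 0 < M None w' \<and> M None w' < 1 \<and> v \<in> {0, 1}
       \<and> M' = M(None := (M None)(w' := v)))"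

end

theory Submission
  imports Defs
begin


definition tm :: "real \<Rightarrow> ('w::finite \<Rightarrow> real) \<Rightarrow> 'w set \<Rightarrow> real" where
 "tm r z u = Min (insert r {z i | i. ind u i \<noteq> 0})"

lemma tlist_Cons: "tlist r z (u # us) = tm r z u # tlist (r - tm r z u) (\<lambda>i. z i - tm r z u * ind u i) us"
  by (simp add: tm_def Let_def)

declare tlist.simps(2)[simp del]

fun chs :: "real \<Rightarrow> ('w::finite \<Rightarrow> real) \<Rightarrow> 'w set list \<Rightarrow> 'w \<Rightarrow> real" where
  "chs r z [] = (\<lambda>i. 0)"
| "chs r z (u # us) = (\<lambda>i. tm r z u * ind u i + chs (r - tm r z u) (\<lambda>i. z i - tm r z u * ind u i) us i)"

lemma ind_ne0: "(ind u i \<noteq> 0) = (i \<in> u)" by (simp add: ind_def)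

lemma tm_fin: "finite {z i | i::'w::finite. ind u i \<noteq> 0}"
  by (rule finite_image_set) simp

lemma tm_le_r: "tm r z u \<le> r"
  unfolding tm_def by (rule Min_le) (auto simp: tm_fin)

lemma tm_le_z: "i \<in> u \<Longrightarrow> tm r z u \<le> z i"
  unfolding tm_def by (rule Min_le) (auto simp: tm_fin ind_ne0)

lemma tm_cases: "tm r z u = r \<or> (\<exists>i\<in>u. tm r z u = z i)"
proof -
  have "tm r z u \<in> insert r {z i | i. ind u i \<noteq> 0}"
    unfolding tm_def by (rule Min_in) (auto simp: tm_fin)
  thus ?thesis by (auto simp: ind_ne0)
qed

lemma tm_ge: "c \<le> r \<Longrightarrow> (\<forall>i\<in>u. c \<le> z i) \<Longrightarrow> c \<le> tm r z u"
  unfolding tm_def by (subst Min_ge_iff) (auto simp: tm_fin ind_ne0)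

lemma tm_nonneg: "0 \<le> r \<Longrightarrow> (\<forall>i. 0 \<le> z i) \<Longrightarrow> 0 \<le> tm r z u"
  by (rule tm_ge) auto

lemma length_tlist[simp]: "length (tlist r z us) = length us"
  by (induction us arbitrary: r z) (auto simp: tlist_Cons)

lemma basic: "0 \<le> r \<Longrightarrow> (\<forall>i. 0 \<le> z i) \<Longrightarrow> (\<forall>t\<in>set (tlist r z us). 0 \<le> t) \<and> sum_list (tlist r z us) \<le> r
   \<and> (\<forall>i. 0 \<le> chs r z us i \<and> chs r z us i \<le> z i)"
proof (induction us arbitrary: r z)
  case Nil thus ?case by simp
next
  case (Cons u us)
  define t where "t = tm r z u"
  have t0: "0 \<le> t" using Cons.prems tm_nonneg t_def by auto
  have tr: "t \<le> r" using tm_le_r t_def by auto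
  have tz: "\<forall>i. 0 \<le> z i - t * ind u i" using tm_le_z Cons.prems t_def by (auto simp: ind_def)
  have IH: "(\<forall>t\<in>set (tlist (r - t) (\<lambda>i. z i - t * ind u i) us). 0 \<le> t) \<and> sum_list (tlist (r - t) (\<lambda>i. z i - t * ind u i) us) \<le> r - t
   \<and> (\<forall>i. 0 \<le> chs (r - t) (\<lambda>i. z i - t * ind u i) us i \<and> chs (r - t) (\<lambda>i. z i - t * ind u i) us i \<le> z i - t * ind u i)"
    using Cons.IH[of "r - t" "\<lambda>i. z i - t * ind u i"] tr tz by auto
  have "\<forall>i. 0 \<le> chs r z (u # us) i \<and> chs r z (u # us) i \<le> z i"
  proof
    fix i
    have "0 \<le> chs (r - t) (\<lambda>i. z i - t * ind u i) us i" "chs (r - t) (\<lambda>i. z i - t * ind u i) us i \<le> z i - t * ind u i"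
      using IH by blast+
    thus "0 \<le> chs r z (u # us) i \<and> chs r z (u # us) i \<le> z i" using t0
      unfolding chs.simps t_def[symmetric] by (simp add: ind_def)
  qed
  thus ?case using IH t0 tr unfolding tlist_Cons t_def[symmetric] by auto
qed

lemma chs_sum: "(\<Sum>k<length us. tlist r z us ! k * ind (us ! k) i) = chs r z us i"
  by (induction us arbitrary: r z) (simp_all del: sum.lessThan_Suc add: tlist_Cons sum.lessThan_Suc_shift)

lemma Chhat_chs: "Chhat pf f x = chs 1 x (acc_list pf f)"
  by (simp add: Chhat_def ts_def chs_sum fun_eq_iff)

lemma mix: "0 \<le> r \<Longrightarrow> (\<forall>i. 0 \<le> z i) \<Longrightarrow>
  (\<forall>i. (chs r z us i \<le> z' i \<and> z' i \<le> z i) \<or> (chs r z us i < z i \<and> z i \<le> z' i)) \<Longrightarrow>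
  tlist r z' us = tlist r z us"
proof (induction us arbitrary: r z z')
  case Nil thus ?case by simp
next
  case (Cons u us)
  define t where "t = tm r z u"
  define t' where "t' = tm r z' u"
  define zr where "zr = (\<lambda>i. z i - t * ind u i)"
  have t0: "0 \<le> t" using Cons.prems tm_nonneg t_def by auto
  have tr: "t \<le> r" using tm_le_r t_def by auto
  have tz: "\<forall>i. 0 \<le> zr i" using tm_le_z Cons.prems t_def zr_def by (auto simp: ind_def)
  have rest0: "\<forall>i. 0 \<le> chs (r - t) zr us i" using basic[of "r - t" zr us] tr tz by auto
  have chs_eq: "\<And>i. chs r z (u # us) i = t * ind u i + chs (r - t) zr us i"
    by (simp add: t_def zr_def)
  have cond: "\<forall>i. (chs r z (u # us) i \<le> z' i \<and> z' i \<le> z i) \<or> (chs r z (u # us) i < z i \<and> z i \<le> z' i)"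
    using Cons.prems(3) by blast
  have "t \<le> t'"
    unfolding t'_def
  proof (rule tm_ge)
    show "t \<le> r" by (rule tr)
    show "\<forall>i\<in>u. t \<le> z' i"
    proof
      fix i assume iu: "i \<in> u"
      have "t \<le> chs r z (u # us) i" using chs_eq[of i] rest0 iu by (simp add: ind_def)
      moreover have "t \<le> z i" using tm_le_z[OF iu] t_def by simp
      moreover have "(chs r z (u # us) i \<le> z' i \<and> z' i \<le> z i) \<or> (chs r z (u # us) i < z i \<and> z i \<le> z' i)"
        using cond by blast
      ultimately show "t \<le> z' i" by linarith
    qed
  qed
  moreover have "t' \<le> t"
  proof -
    have "t' \<le> r" using tm_le_r t'_def by simp
    moreover have "t' \<le> t" if j: "j \<in> u" "t = z j" for j
    proof -
      have "t \<le> chs r z (u # us) j" using chs_eq[of j] rest0 j by (simp add: ind_def)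
      moreover have "(chs r z (u # us) j \<le> z' j \<and> z' j \<le> z j) \<or> (chs r z (u # us) j < z j \<and> z j \<le> z' j)"
        using cond by blast
      ultimately have "z' j \<le> z j" using j by linarith
      moreover have "t' \<le> z' j" using tm_le_z[OF j(1)] t'_def by simp
      ultimately show ?thesis using j by simp
    qed
    ultimately show ?thesis using tm_cases[of r z u] t_def by auto
  qed
  ultimately have tt: "t' = t" by simp
  have "tlist (r - t) (\<lambda>i. z' i - t * ind u i) us = tlist (r - t) zr us"
  proof (rule Cons.IH)
    show "0 \<le> r - t" using tr by simp
    show "\<forall>i. 0 \<le> zr i" by (rule tz)
    show "\<forall>i. chs (r - t) zr us i \<le> z' i - t * ind u i \<and> z' i - t * ind u i \<le> zr i \<or>
          chs (r - t) zr us i < zr i \<and> zr i \<le> z' i - t * ind u i"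
      using cond chs_eq zr_def by (smt (verit))
  qed
  thus ?case using tt unfolding tlist_Cons t_def[symmetric] t'_def[symmetric] zr_def by simp
qed

lemma nth_le_sum_list: "(\<forall>x\<in>set xs. (0::real) \<le> x) \<Longrightarrow> k < length xs \<Longrightarrow> xs ! k \<le> sum_list xs"
proof (induction xs arbitrary: k)
  case Nil thus ?case by simp
next
  case (Cons a xs)
  have "0 \<le> sum_list xs" using Cons.prems by (simp add: sum_list_nonneg)
  thus ?case using Cons by (cases k) (auto intro: add_increasing)
qed

lemma zero_budget: "(\<forall>i. 0 \<le> z i) \<Longrightarrow> tlist 0 z us = replicate (length us) 0"
proof (induction us)
  case Nil thus ?case by simp
next
  case (Cons u us)
  have "tm 0 z u = 0" using tm_nonneg[of 0 z u] tm_le_r[of 0 z u] Cons.prems by simp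
  thus ?case using Cons by (simp add: tlist_Cons)
qed

lemma prefix_zero: "0 \<le> r \<Longrightarrow> (\<forall>i. 0 \<le> z i) \<Longrightarrow> (\<forall>u\<in>set pre. \<exists>i\<in>u. z i = 0) \<Longrightarrow>
   tlist r z (pre @ rest) = replicate (length pre) 0 @ tlist r z rest"
proof (induction pre)
  case Nil thus ?case by simp
next
  case (Cons u pre)
  obtain i where "i \<in> u" "z i = 0" using Cons.prems by auto
  hence "tm r z u = 0" using tm_nonneg[of r z u] tm_le_z[of i u r z] Cons.prems by simp
  thus ?case using Cons by (simp add: tlist_Cons)
qed

lemma one_then: "(\<forall>i. 0 \<le> z i) \<Longrightarrow> (\<forall>i\<in>u. 1 \<le> z i) \<Longrightarrow>
   tlist 1 z (u # rest) = 1 # replicate (length rest) 0"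
proof -
  assume a: "\<forall>i. 0 \<le> z i" "\<forall>i\<in>u. 1 \<le> z i"
  have t: "tm 1 z u = 1" using tm_ge[of 1 1 u z] tm_le_r[of 1 z u] a by simp
  have "\<forall>i. 0 \<le> z i - 1 * ind u i" using a by (simp add: ind_def)
  thus ?thesis using zero_budget[of "\<lambda>i. z i - 1 * ind u i" rest] by (simp add: tlist_Cons t)
qed

lemma empty_in: "0 \<le> r \<Longrightarrow> (\<forall>i. 0 \<le> z i) \<Longrightarrow> {} \<in> set us \<Longrightarrow> sum_list (tlist r z us) = r"
proof (induction us arbitrary: r z)
  case Nil thus ?case by simp
next
  case (Cons u us)
  define t where "t = tm r z u"
  have t0: "0 \<le> t" using Cons.prems tm_nonneg t_def by auto
  have tr: "t \<le> r" using tm_le_r t_def by auto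
  have tz: "\<forall>i. 0 \<le> z i - t * ind u i" using tm_le_z Cons.prems t_def by (auto simp: ind_def)
  show ?case
  proof (cases "u = {}")
    case True
    hence "t = r" using tm_cases[of r z u] t_def by auto
    thus ?thesis using zero_budget[OF tz, of us] unfolding tlist_Cons t_def[symmetric] by (simp add: sum_list_replicate)
  next
    case False
    hence "{} \<in> set us" using Cons.prems by auto
    hence "sum_list (tlist (r - t) (\<lambda>i. z i - t * ind u i) us) = r - t"
      using Cons.IH tr tz by simp
    thus ?thesis unfolding tlist_Cons t_def[symmetric] by simp
  qed
qed

lemma chs_le_sum: "0 \<le> r \<Longrightarrow> (\<forall>i. 0 \<le> z i) \<Longrightarrow> chs r z us i \<le> sum_list (tlist r z us)"
proof (induction us arbitrary: r z)
  case Nil thus ?case by simp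
next
  case (Cons u us)
  define t where "t = tm r z u"
  have t0: "0 \<le> t" using Cons.prems tm_nonneg t_def by auto
  have tr: "t \<le> r" using tm_le_r t_def by auto
  have tz: "\<forall>i. 0 \<le> z i - t * ind u i" using tm_le_z Cons.prems t_def by (auto simp: ind_def)
  have "chs (r - t) (\<lambda>i. z i - t * ind u i) us i \<le> sum_list (tlist (r - t) (\<lambda>i. z i - t * ind u i) us)"
    using Cons.IH tr tz by simp
  moreover have "t * ind u i \<le> t" using t0 by (simp add: ind_def)
  ultimately show ?case unfolding tlist_Cons chs.simps t_def[symmetric] by simp
qed

lemma tk_le_z: "0 \<le> r \<Longrightarrow> (\<forall>i. 0 \<le> z i) \<Longrightarrow> k < length us \<Longrightarrow> i \<in> us ! k \<Longrightarrow> tlist r z us ! k \<le> z i"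
proof (induction us arbitrary: r z k)
  case Nil thus ?case by simp
next
  case (Cons u us)
  define t where "t = tm r z u"
  have t0: "0 \<le> t" using Cons.prems tm_nonneg t_def by auto
  have tr: "t \<le> r" using tm_le_r t_def by auto
  have tz: "\<forall>i. 0 \<le> z i - t * ind u i" using tm_le_z Cons.prems t_def by (auto simp: ind_def)
  show ?case
  proof (cases k)
    case 0 thus ?thesis using Cons.prems tm_le_z by (simp add: tlist_Cons)
  next
    case (Suc k')
    have "tlist (r - t) (\<lambda>i. z i - t * ind u i) us ! k' \<le> z i - t * ind u i"
      using Cons.IH[of "r - t" "\<lambda>i. z i - t * ind u i" k'] Cons.prems tr tz Suc by simp
    moreover have "0 \<le> t * ind u i" using t0 by (simp add: ind_def)
    ultimately show ?thesis using Suc unfolding tlist_Cons t_def[symmetric] by simp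
  qed
qed

lemma bind_prefix: "0 \<le> r \<Longrightarrow> (\<forall>i. 0 \<le> z i) \<Longrightarrow> k < length us \<Longrightarrow> 0 < tlist r z us ! k \<Longrightarrow>
  \<forall>j<k. \<exists>i\<in>us ! j. i \<notin> us ! k \<and> chs r z us i = z i \<and> chs r z us i \<le> r - tlist r z us ! k"
proof (induction us arbitrary: r z k)
  case Nil thus ?case by simp
next
  case (Cons u us)
  define t where "t = tm r z u"
  define zr where "zr = (\<lambda>i. z i - t * ind u i)"
  have t0: "0 \<le> t" using Cons.prems tm_nonneg t_def by auto
  have tr: "t \<le> r" using tm_le_r t_def by auto
  have tz: "\<forall>i. 0 \<le> zr i" using tm_le_z Cons.prems t_def zr_def by (auto simp: ind_def)
  have bas: "(\<forall>t\<in>set (tlist (r - t) zr us). 0 \<le> t) \<and> sum_list (tlist (r - t) zr us) \<le> r - t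
   \<and> (\<forall>i. 0 \<le> chs (r - t) zr us i \<and> chs (r - t) zr us i \<le> zr i)" using basic[of "r - t" zr us] tr tz by simp
  have chs_eq: "\<And>i. chs r z (u # us) i = t * ind u i + chs (r - t) zr us i"
    by (simp add: t_def zr_def)
  have tl_eq: "tlist r z (u # us) = t # tlist (r - t) zr us"
    by (simp add: tlist_Cons t_def zr_def)
  show ?case
  proof (cases k)
    case 0 thus ?thesis by simp
  next
    case (Suc k')
    have k': "k' < length us" "0 < tlist (r - t) zr us ! k'" using Cons.prems Suc tl_eq by auto
    have tk_sum: "tlist (r - t) zr us ! k' \<le> r - t"
      using nth_le_sum_list[of "tlist (r - t) zr us" k'] bas k' by simp
    show ?thesis
    proof (intro allI impI)
      fix j assume "j < k"
      show "\<exists>i\<in>(u # us) ! j. i \<notin> (u # us) ! k \<and> chs r z (u # us) i = z i \<and>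
               chs r z (u # us) i \<le> r - tlist r z (u # us) ! k"
      proof (cases j)
        case 0
        have "t \<noteq> r"
        proof
          assume "t = r"
          hence "tlist (r - t) zr us = replicate (length us) 0" using zero_budget[OF tz] by simp
          thus False using k' by simp
        qed
        then obtain i where i: "i \<in> u" "t = z i" using tm_cases[of r z u] t_def by auto
        have zri: "zr i = 0" using i by (simp add: zr_def ind_def)
        have "i \<notin> us ! k'"
        proof
          assume "i \<in> us ! k'"
          hence "tlist (r - t) zr us ! k' \<le> zr i" using tk_le_z[of "r - t" zr k' us i] tr tz k' by simp
          thus False using zri k' by simp
        qed
        moreover have "chs (r - t) zr us i = 0" using bas zri by (metis order_antisym)
        ultimately show ?thesis using 0 Suc i chs_eq tl_eq tk_sum by (auto simp: ind_def)
      next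
        case (Suc j')
        have "j' < k'" using \<open>j < k\<close> Suc \<open>k = Suc k'\<close> by simp
        then obtain i where i: "i \<in> us ! j'" "i \<notin> us ! k'" "chs (r - t) zr us i = zr i"
          "chs (r - t) zr us i \<le> r - t - tlist (r - t) zr us ! k'"
          using Cons.IH[of "r - t" zr k'] tr tz k' by fastforce
        have "t * ind u i \<le> t" using t0 by (simp add: ind_def)
        thus ?thesis using i Suc \<open>k = Suc k'\<close> chs_eq tl_eq zr_def by (intro bexI[of _ i]) auto
      qed
    qed
  qed
qed

lemma bind_all: "0 \<le> r \<Longrightarrow> (\<forall>i. 0 \<le> z i) \<Longrightarrow> sum_list (tlist r z us) < r \<Longrightarrow>
  \<forall>u\<in>set us. \<exists>i\<in>u. chs r z us i = z i"
proof (induction us arbitrary: r z)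
  case Nil thus ?case by simp
next
  case (Cons u us)
  define t where "t = tm r z u"
  define zr where "zr = (\<lambda>i. z i - t * ind u i)"
  have t0: "0 \<le> t" using Cons.prems tm_nonneg t_def by auto
  have tr: "t \<le> r" using tm_le_r t_def by auto
  have tz: "\<forall>i. 0 \<le> zr i" using tm_le_z Cons.prems t_def zr_def by (auto simp: ind_def)
  have bas: "(\<forall>t\<in>set (tlist (r - t) zr us). 0 \<le> t) \<and> sum_list (tlist (r - t) zr us) \<le> r - t
   \<and> (\<forall>i. 0 \<le> chs (r - t) zr us i \<and> chs (r - t) zr us i \<le> zr i)" using basic[of "r - t" zr us] tr tz by simp
  have chs_eq: "\<And>i. chs r z (u # us) i = t * ind u i + chs (r - t) zr us i"
    by (simp add: t_def zr_def)
  have tl_eq: "tlist r z (u # us) = t # tlist (r - t) zr us"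
    by (simp add: tlist_Cons t_def zr_def)
  have lt: "sum_list (tlist (r - t) zr us) < r - t" using Cons.prems tl_eq by simp
  have "t \<noteq> r" using lt bas by (metis sum_list_nonneg diff_self not_le)
  then obtain i where i: "i \<in> u" "t = z i" using tm_cases[of r z u] t_def by auto
  have zri: "zr i = 0" using i by (simp add: zr_def ind_def)
  have "chs (r - t) zr us i = 0" using bas zri by (metis order_antisym)
  hence hd: "\<exists>i\<in>u. chs r z (u # us) i = z i" using i chs_eq by (intro bexI[of _ i]) (auto simp: ind_def)
  have "\<forall>u'\<in>set us. \<exists>i\<in>u'. chs (r - t) zr us i = zr i" using Cons.IH[of "r - t" zr] tr tz lt by simp
  hence "\<forall>u'\<in>set us. \<exists>i\<in>u'. chs r z (u # us) i = z i"
  proof (intro ballI)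
    fix u' assume "\<forall>u'\<in>set us. \<exists>i\<in>u'. chs (r - t) zr us i = zr i" "u' \<in> set us"
    then obtain i where "i \<in> u'" "chs (r - t) zr us i = zr i" by blast
    thus "\<exists>i\<in>u'. chs r z (u # us) i = z i" using chs_eq[of i] zr_def by auto
  qed
  thus ?case using hd by simp
qed



definition xv :: "('w \<Rightarrow> 'f option \<Rightarrow> 'f option \<Rightarrow> bool) \<Rightarrow> ('f::finite option \<Rightarrow> 'w::finite \<Rightarrow> real) \<Rightarrow> 'f \<Rightarrow> 'w \<Rightarrow> real" where
  "xv pw M f = (\<lambda>w. min (Aprec pw M (Some f) w) 1)"

lemma Chhat_ts: "ts pf f x = ts pf f y \<Longrightarrow> Chhat pf f x = Chhat pf f y"
  by (simp add: Chhat_def)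

lemma Aprec_ge: "pseudo_matching M \<Longrightarrow> M g w \<le> Aprec pw M g w"
  unfolding Aprec_def
  by (rule member_le_sum) (auto simp: pseudo_matching_def unit_vec_def)

lemma Aprec_ge2: "pseudo_matching M \<Longrightarrow> h \<noteq> g \<Longrightarrow> pw w g h \<Longrightarrow> M g w + M h w \<le> Aprec pw M g w"
proof -
  assume a: "pseudo_matching M" "h \<noteq> g" "pw w g h"
  have "M g w + M h w = (\<Sum>f'\<in>{g, h}. M f' w)" using a by simp
  also have "\<dots> \<le> (\<Sum>f'\<in>{f'. pw w g f' \<or> g = f'}. M f' w)"
    by (rule sum_mono2) (use a in \<open>auto simp: pseudo_matching_def unit_vec_def\<close>)
  finally show ?thesis unfolding Aprec_def .
qed

lemma Aprec_upd: "Aprec pw (M(h := V)) g w = Aprec pw M g w + (if pw w g h \<or> g = h then V w - M h w else 0)"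
proof -
  let ?S = "{f'. pw w g f' \<or> g = f'}"
  have fin: "finite ?S" by simp
  show ?thesis
  proof (cases "h \<in> ?S")
    case True
    have "(\<Sum>f'\<in>?S. (M(h := V)) f' w) = (M(h := V)) h w + (\<Sum>f'\<in>?S - {h}. (M(h := V)) f' w)"
      by (rule sum.remove[OF fin True])
    also have "(\<Sum>f'\<in>?S - {h}. (M(h := V)) f' w) = (\<Sum>f'\<in>?S - {h}. M f' w)"
      by (rule sum.cong) auto
    also have "(\<Sum>f'\<in>?S. M f' w) = M h w + (\<Sum>f'\<in>?S - {h}. M f' w)"
      by (rule sum.remove[OF fin True])
    moreover note True
    ultimately show ?thesis unfolding Aprec_def by simp
  next
    case False
    have "(\<Sum>f'\<in>?S. (M(h := V)) f' w) = (\<Sum>f'\<in>?S. M f' w)"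
      by (rule sum.cong) (use False in auto)
    thus ?thesis using False unfolding Aprec_def by simp
  qed
qed

lemma block_iff:
  assumes "\<forall>w. 0 \<le> Mf w \<and> Mf w \<le> 1" "\<forall>w. Mf w \<le> A w"
  shows "(\<exists>M''. unit_vec M'' \<and> firm_prefers pf f M'' Mf \<and> (\<forall>w. M'' w \<le> A w))
     \<longleftrightarrow> Chhat pf f (\<lambda>w. min (A w) 1) \<noteq> Mf"
proof -
  define x where "x = (\<lambda>w. min (A w) 1)"
  define L where "L = acc_list pf f"
  have x0: "\<forall>i. 0 \<le> x i" using assms unfolding x_def by (metis min.boundedI order_trans zero_le_one)
  have Chx: "Chhat pf f x = chs 1 x L" by (simp add: Chhat_chs L_def)
  have bas: "\<forall>i. 0 \<le> chs 1 x L i \<and> chs 1 x L i \<le> x i" using basic[of 1 x L] x0 by simp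
  show ?thesis unfolding x_def[symmetric]
  proof
    assume "\<exists>M''. unit_vec M'' \<and> firm_prefers pf f M'' Mf \<and> (\<forall>w. M'' w \<le> A w)"
    then obtain M'' where m: "unit_vec M''" "firm_prefers pf f M'' Mf" "\<forall>w. M'' w \<le> A w" by blast
    show "Chhat pf f x \<noteq> Mf"
    proof
      assume e: "Chhat pf f x = Mf"
      define y where "y = (\<lambda>i. max (M'' i) (Mf i))"
      have "tlist 1 y L = tlist 1 x L"
      proof (rule mix)
        show "\<forall>i. chs 1 x L i \<le> y i \<and> y i \<le> x i \<or> chs 1 x L i < x i \<and> x i \<le> y i"
          using e Chx m(1,3) assms unfolding y_def x_def unit_vec_def
          by (metis max.cobounded2 max.bounded_iff min.boundedI)
      qed (use x0 in auto)
      hence "Chhat pf f y = Chhat pf f x" by (intro Chhat_ts) (simp add: ts_def L_def)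
      moreover have "M'' = Chhat pf f y" using m(2) unfolding firm_prefers_def y_def by simp
      ultimately show False using e m(2) unfolding firm_prefers_def by simp
    qed
  next
    assume ne: "Chhat pf f x \<noteq> Mf"
    define N where "N = Chhat pf f x"
    define y where "y = (\<lambda>i. max (N i) (Mf i))"
    have "tlist 1 y L = tlist 1 x L"
    proof (rule mix)
      show "\<forall>i. chs 1 x L i \<le> y i \<and> y i \<le> x i \<or> chs 1 x L i < x i \<and> x i \<le> y i"
        using Chx bas assms unfolding y_def x_def N_def
        by (metis max.cobounded1 max.bounded_iff min.boundedI)
    qed (use x0 in auto)
    hence "Chhat pf f y = N" unfolding N_def by (intro Chhat_ts) (simp add: ts_def L_def)
    moreover have "unit_vec N" using bas Chx unfolding N_def unit_vec_def x_def by (metis min.bounded_iff)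
    moreover have "\<forall>w. N w \<le> A w" using bas Chx unfolding N_def x_def by (metis min.bounded_iff)
    ultimately show "\<exists>M''. unit_vec M'' \<and> firm_prefers pf f M'' Mf \<and> (\<forall>w. M'' w \<le> A w)"
      using ne unfolding firm_prefers_def y_def N_def by auto
  qed
qed

lemma stable_iff: "stable pw pf M \<longleftrightarrow> pseudo_matching M
     \<and> (\<forall>f. M (Some f) = Chhat pf f (M (Some f)) \<and> (\<forall>w. pw w None (Some f) \<longrightarrow> M (Some f) w = 0))
     \<and> (pseudo_matching M \<longrightarrow> (\<forall>f. Chhat pf f (xv pw M f) = M (Some f)))"
proof -
  have "pseudo_matching M \<Longrightarrow> (\<exists>M''. unit_vec M'' \<and> firm_prefers pf f M'' (M (Some f)) \<and> (\<forall>w. M'' w \<le> Aprec pw M (Some f) w))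
     \<longleftrightarrow> Chhat pf f (xv pw M f) \<noteq> M (Some f)" for f
    unfolding xv_def
    by (rule block_iff) (auto simp: Aprec_ge, auto simp: pseudo_matching_def unit_vec_def)
  thus ?thesis unfolding stable_def by blast
qed

lemma transfer:
  assumes pm: "pseudo_matching M" and pm': "pseudo_matching M'"
    and ch: "Chhat pf f (xv pw M f) = M (Some f)" and eq: "M' (Some f) = M (Some f)"
    and inc: "\<forall>w. Aprec pw M (Some f) w < Aprec pw M' (Some f) w \<longrightarrow> M (Some f) w < Aprec pw M (Some f) w"
  shows "Chhat pf f (xv pw M' f) = M' (Some f)"
proof -
  define x where "x = xv pw M f"
  define x' where "x' = xv pw M' f"
  define L where "L = acc_list pf f"
  have m01: "\<forall>w. 0 \<le> M (Some f) w \<and> M (Some f) w \<le> 1" using pm by (simp add: pseudo_matching_def unit_vec_def)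
  have x0: "\<forall>i. 0 \<le> x i" using m01 Aprec_ge[OF pm] unfolding x_def xv_def by (metis min.boundedI order_trans zero_le_one)
  have Chx: "chs 1 x L = M (Some f)" using ch by (simp add: Chhat_chs L_def x_def)
  have "tlist 1 x' L = tlist 1 x L"
  proof (rule mix)
    show "\<forall>i. chs 1 x L i \<le> x' i \<and> x' i \<le> x i \<or> chs 1 x L i < x i \<and> x i \<le> x' i"
    proof
      fix i
      have a1: "M (Some f) i \<le> x' i" using m01 Aprec_ge[OF pm', of "Some f" i pw] eq unfolding x'_def xv_def by simp
      show "chs 1 x L i \<le> x' i \<and> x' i \<le> x i \<or> chs 1 x L i < x i \<and> x i \<le> x' i"
      proof (cases "x' i \<le> x i")
        case True thus ?thesis using a1 Chx by simp
      next
        case False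
        hence "Aprec pw M (Some f) i < Aprec pw M' (Some f) i" "Aprec pw M (Some f) i < 1" "x i = Aprec pw M (Some f) i"
          unfolding x_def x'_def xv_def by auto
        thus ?thesis using inc Chx False by auto
      qed
    qed
  qed (use x0 in auto)
  hence "Chhat pf f x' = Chhat pf f x" by (intro Chhat_ts) (simp add: ts_def L_def)
  thus ?thesis using ch eq unfolding x_def x'_def by simp
qed

lemma Ch_ge_tk: "(\<forall>i. 0 \<le> x i) \<Longrightarrow> k < length (acc_list pf f) \<Longrightarrow>
   ts pf f x ! k * ind (acc_list pf f ! k) i \<le> Chhat pf f x i"
  unfolding Chhat_def
proof (rule member_le_sum)
  assume "\<forall>i. 0 \<le> x i"
  hence "\<forall>t\<in>set (ts pf f x). 0 \<le> t" using basic[of 1 x "acc_list pf f"] by (simp add: ts_def)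
  thus "\<And>j. j \<in> {..<length (acc_list pf f)} - {k} \<Longrightarrow> 0 \<le> ts pf f x ! j * ind (acc_list pf f ! j) i"
    by (auto simp: ind_def ts_def)
qed auto

lemma single_sel:
  assumes k: "k < length (acc_list pf f)"
    and pre: "\<forall>j<k. \<exists>i\<in>acc_list pf f ! j. z i = 0"
    and one: "\<forall>i\<in>acc_list pf f ! k. 1 \<le> z i" and z0: "\<forall>i. 0 \<le> z i"
  shows "Chhat pf f z = ind (acc_list pf f ! k)"
proof -
  define L where "L = acc_list pf f"
  have Lsplit: "L = take k L @ (L ! k # drop (Suc k) L)" using k L_def by (simp add: id_take_nth_drop)
  have pre': "\<forall>u\<in>set (take k L). \<exists>i\<in>u. z i = 0"
    using pre k unfolding L_def by (auto simp: in_set_conv_nth)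
  have one': "\<forall>i\<in>L ! k. 1 \<le> z i" using one L_def by simp
  have "ts pf f z = tlist 1 z (take k L @ (L ! k # drop (Suc k) L))"
    using Lsplit by (simp add: ts_def L_def[symmetric])
  also have "\<dots> = replicate k 0 @ (1 # replicate (length (drop (Suc k) L)) 0)"
    using prefix_zero[of 1 z "take k L"] one_then[OF z0 one'] pre' z0 k L_def by simp
  finally have tsz: "ts pf f z = replicate k 0 @ (1 # replicate (length (drop (Suc k) L)) 0)" .
  have tsj: "ts pf f z ! j = (if j = k then 1 else 0)" if "j < length L" for j
    using that k unfolding tsz L_def
    by (cases "j < k") (auto simp: nth_append nth_Cons' nth_replicate)
  show ?thesis
  proof
    fix i
    have "Chhat pf f z i = (\<Sum>j<length L. (if j = k then ind (L ! k) i else 0))"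
      unfolding Chhat_def L_def[symmetric] by (rule sum.cong) (auto simp: tsj)
    also have "\<dots> = ind (L ! k) i" using k L_def by simp
    finally show "Chhat pf f z i = ind (acc_list pf f ! k) i" by (simp add: L_def)
  qed
qed



lemma ts_nonneg: "(\<forall>i. 0 \<le> x i) \<Longrightarrow> \<forall>t\<in>set (ts pf f x). 0 \<le> t"
  using basic[of 1 x "acc_list pf f"] by (simp add: ts_def)

lemma ts_fix: "(\<forall>i. 0 \<le> x i) \<Longrightarrow> Chhat pf f x = Mf \<Longrightarrow> (\<forall>i. Mf i \<le> y i \<and> y i \<le> x i) \<Longrightarrow>
   ts pf f y = ts pf f x"
  unfolding ts_def by (rule mix) (auto simp: Chhat_chs)

lemma type3_ok:
  assumes st: "stable pw pf M" and t3: "type3 M M'"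
  shows "stable pw pf M'"
proof -
  obtain w' v where wv: "0 < M None w'" "M None w' < 1" "v \<in> {0, 1}" and M': "M' = M(None := (M None)(w' := v))"
    using t3 unfolding type3_def by blast
  have pm: "pseudo_matching M" and fz: "\<forall>f. M (Some f) = Chhat pf f (M (Some f)) \<and> (\<forall>w. pw w None (Some f) \<longrightarrow> M (Some f) w = 0)"
    and ch: "\<forall>f. Chhat pf f (xv pw M f) = M (Some f)" using st unfolding stable_iff by auto
  have pm': "pseudo_matching M'" using pm wv unfolding M' pseudo_matching_def unit_vec_def by auto
  have eq: "\<And>f. M' (Some f) = M (Some f)" unfolding M' by simp
  have "Chhat pf f (xv pw M' f) = M' (Some f)" for f
  proof (rule transfer[OF pm pm' _ eq])
    show "Chhat pf f (xv pw M f) = M (Some f)" using ch by simp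
    show "\<forall>w. Aprec pw M (Some f) w < Aprec pw M' (Some f) w \<longrightarrow> M (Some f) w < Aprec pw M (Some f) w"
    proof (intro allI impI)
      fix w assume lt: "Aprec pw M (Some f) w < Aprec pw M' (Some f) w"
      hence c: "pw w (Some f) None" "((M None)(w' := v)) w - M None w > 0"
        unfolding M' Aprec_upd by (auto split: if_splits)
      hence "w = w'" by (cases "w = w'") auto
      thus "M (Some f) w < Aprec pw M (Some f) w" using Aprec_ge2[OF pm, of None "Some f" pw w] c wv by simp
    qed
  qed
  thus ?thesis unfolding stable_iff using pm' fz eq by simp
qed

lemma type1_ok:
  assumes st: "stable pw pf M" and t1: "type1 pf M M'"
  shows "stable pw pf M'"
proof -
  obtain f' where s: "sum_list (ts pf f' (M (Some f'))) < 1" and M': "M' = M(Some f' := (\<lambda>_. 0))"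
    using t1 unfolding type1_def by blast
  have pm: "pseudo_matching M" and fz: "\<forall>f. M (Some f) = Chhat pf f (M (Some f)) \<and> (\<forall>w. pw w None (Some f) \<longrightarrow> M (Some f) w = 0)"
    and ch: "\<forall>f. Chhat pf f (xv pw M f) = M (Some f)" using st unfolding stable_iff by auto
  have pm': "pseudo_matching M'" using pm unfolding M' pseudo_matching_def unit_vec_def by auto
  define L where "L = acc_list pf f'"
  have m01: "\<forall>w. 0 \<le> M (Some f') w \<and> M (Some f') w \<le> 1" using pm by (simp add: pseudo_matching_def unit_vec_def)
  have ne: "{} \<notin> set L"
  proof
    assume "{} \<in> set L"
    hence "sum_list (tlist 1 (M (Some f')) L) = 1" using empty_in[of 1 "M (Some f')" L] m01 by simp
    thus False using s by (simp add: ts_def L_def)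
  qed
  have zero_ch: "Chhat pf f' z = (\<lambda>_. 0)" if z0: "\<forall>i. 0 \<le> z i" and pre: "\<forall>u\<in>set L. \<exists>i\<in>u. z i = 0" for z
  proof -
    have "ts pf f' z = replicate (length L) 0"
      using prefix_zero[of 1 z L "[]"] z0 pre by (simp add: ts_def L_def)
    thus ?thesis unfolding Chhat_def L_def[symmetric] by (auto simp: fun_eq_iff)
  qed
  have fixf': "Chhat pf f' (\<lambda>_. 0) = (\<lambda>_. 0)"
  proof (rule zero_ch)
    show "\<forall>u\<in>set L. \<exists>i\<in>u. (0::real) = 0" using ne by (metis ex_in_conv)
  qed simp
  have chf': "Chhat pf f' (xv pw M' f') = (\<lambda>_. 0)"
  proof (rule zero_ch)
    show "\<forall>i. 0 \<le> xv pw M' f' i" using Aprec_ge[OF pm', of "Some f'" _ pw] unfolding xv_def M'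
      by (simp add: min_def)
    define x where "x = xv pw M f'"
    have x0: "\<forall>i. 0 \<le> x i" using m01 Aprec_ge[OF pm] unfolding x_def xv_def by (metis min.boundedI order_trans zero_le_one)
    have Chx: "chs 1 x L = M (Some f')" using ch by (simp add: Chhat_chs L_def x_def)
    have "ts pf f' (M (Some f')) = ts pf f' x"
      by (rule ts_fix[OF x0]) (use ch m01 Aprec_ge[OF pm] in \<open>auto simp: x_def xv_def\<close>)
    hence sx: "sum_list (tlist 1 x L) < 1" using s by (simp add: ts_def L_def)
    have b: "\<forall>u\<in>set L. \<exists>i\<in>u. chs 1 x L i = x i" using bind_all[OF _ x0 sx] by simp
    have le: "\<And>i. chs 1 x L i < 1" using chs_le_sum[of 1 x L] x0 sx by (meson le_less_trans zero_le_one)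
    show "\<forall>u\<in>set L. \<exists>i\<in>u. xv pw M' f' i = 0"
    proof
      fix u assume "u \<in> set L"
      then obtain i where i: "i \<in> u" "chs 1 x L i = x i" using b by blast
      hence "M (Some f') i = min (Aprec pw M (Some f') i) 1" "M (Some f') i < 1"
        using Chx le[of i] unfolding x_def xv_def by auto
      hence "Aprec pw M (Some f') i = M (Some f') i" by (simp add: min_def split: if_splits)
      hence "xv pw M' f' i = 0" unfolding xv_def M' Aprec_upd by simp
      thus "\<exists>i\<in>u. xv pw M' f' i = 0" using i by blast
    qed
  qed
  have fz': "\<forall>f. M' (Some f) = Chhat pf f (M' (Some f)) \<and> (\<forall>w. pw w None (Some f) \<longrightarrow> M' (Some f) w = 0)"
    using fz fixf' unfolding M' by auto
  have "Chhat pf f (xv pw M' f) = M' (Some f)" for f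
  proof (cases "f = f'")
    case True thus ?thesis using chf' M' by simp
  next
    case False
    hence eq: "M' (Some f) = M (Some f)" unfolding M' by simp
    show ?thesis
    proof (rule transfer[OF pm pm' _ eq])
      show "Chhat pf f (xv pw M f) = M (Some f)" using ch by simp
      show "\<forall>w. Aprec pw M (Some f) w < Aprec pw M' (Some f) w \<longrightarrow> M (Some f) w < Aprec pw M (Some f) w"
      proof (intro allI impI)
        fix w assume "Aprec pw M (Some f) w < Aprec pw M' (Some f) w"
        hence "M (Some f') w < 0" unfolding M' Aprec_upd by (auto split: if_splits)
        thus "M (Some f) w < Aprec pw M (Some f) w" using m01 by (meson not_le)
      qed
    qed
  qed
  thus ?thesis unfolding stable_iff using pm' fz' by simp
qed

lemma type2_ok:
  assumes st: "stable pw pf M" and t2: "type2 pf M M'"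
  shows "stable pw pf M'"
proof -
  obtain f' k where k: "k < length (acc_list pf f')" and tk: "ts pf f' (M (Some f')) ! k > 0"
    and M': "M' = M(Some f' := ind (acc_list pf f' ! k))"
    using t2 unfolding type2_def by blast
  have pm: "pseudo_matching M" and fz: "\<forall>f. M (Some f) = Chhat pf f (M (Some f)) \<and> (\<forall>w. pw w None (Some f) \<longrightarrow> M (Some f) w = 0)"
    and ch: "\<forall>f. Chhat pf f (xv pw M f) = M (Some f)" using st unfolding stable_iff by auto
  have pm': "pseudo_matching M'" using pm unfolding M' pseudo_matching_def unit_vec_def by (auto simp: ind_def)
  define L where "L = acc_list pf f'"
  define u where "u = L ! k"
  have m01: "\<forall>w. 0 \<le> M (Some f') w \<and> M (Some f') w \<le> 1" using pm by (simp add: pseudo_matching_def unit_vec_def)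
  have M0: "\<forall>i. 0 \<le> M (Some f') i" using m01 by simp
  have pos: "\<And>w. w \<in> u \<Longrightarrow> ts pf f' (M (Some f')) ! k \<le> M (Some f') w"
    using Ch_ge_tk[OF M0 k] fz unfolding u_def L_def by (metis ind_def mult.right_neutral)
  have bp1: "\<forall>j<k. \<exists>i\<in>L ! j. i \<notin> u"
    using bind_prefix[of 1 "M (Some f')" k L] M0 k tk unfolding L_def u_def ts_def by fastforce
  have fixf': "Chhat pf f' (ind u) = ind u"
    unfolding u_def L_def
    by (rule single_sel[OF k]) (use bp1 in \<open>auto simp: ind_def L_def u_def\<close>)
  have zf': "\<forall>w. pw w None (Some f') \<longrightarrow> ind u w = 0"
  proof (intro allI impI)
    fix w assume "pw w None (Some f')"
    hence "M (Some f') w = 0" using fz by blast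
    thus "ind u w = 0" using pos tk by (force simp: ind_def)
  qed
  have chf': "Chhat pf f' (xv pw M' f') = ind u"
    unfolding u_def L_def
  proof (rule single_sel[OF k])
    have "\<forall>i. 0 \<le> M' (Some f') i" using pm' by (simp add: pseudo_matching_def unit_vec_def)
    thus z0: "\<forall>i. 0 \<le> xv pw M' f' i" using Aprec_ge[OF pm', of "Some f'" _ pw]
      unfolding xv_def by (metis min.boundedI order_trans zero_le_one)
    show "\<forall>i\<in>acc_list pf f' ! k. 1 \<le> xv pw M' f' i"
      using M0 Aprec_ge[OF pm, of "Some f'" _ pw] unfolding xv_def M' Aprec_upd by (auto simp: ind_def)
    define x where "x = xv pw M f'"
    have x0: "\<forall>i. 0 \<le> x i" using m01 Aprec_ge[OF pm] unfolding x_def xv_def by (metis min.boundedI order_trans zero_le_one)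
    have Chx: "chs 1 x L = M (Some f')" using ch by (simp add: Chhat_chs L_def x_def)
    have "ts pf f' (M (Some f')) = ts pf f' x"
      by (rule ts_fix[OF x0]) (use ch m01 Aprec_ge[OF pm] in \<open>auto simp: x_def xv_def\<close>)
    hence tkx: "0 < tlist 1 x L ! k" using tk by (simp add: ts_def L_def)
    have bp: "\<forall>j<k. \<exists>i\<in>L ! j. i \<notin> L ! k \<and> chs 1 x L i = x i \<and> chs 1 x L i \<le> 1 - tlist 1 x L ! k"
      using bind_prefix[of 1 x k L] x0 k tkx L_def by simp
    show "\<forall>j<k. \<exists>i\<in>acc_list pf f' ! j. xv pw M' f' i = 0"
    proof (intro allI impI)
      fix j assume "j < k"
      then obtain i where i: "i \<in> L ! j" "i \<notin> L ! k" "chs 1 x L i = x i" "chs 1 x L i \<le> 1 - tlist 1 x L ! k"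
        using bp by blast
      hence "M (Some f') i = min (Aprec pw M (Some f') i) 1" "M (Some f') i < 1"
        using Chx tkx unfolding x_def xv_def by auto
      hence "Aprec pw M (Some f') i = M (Some f') i" by (simp add: min_def split: if_splits)
      hence "xv pw M' f' i = 0" unfolding xv_def M' Aprec_upd using i(2) by (simp add: ind_def L_def)
      thus "\<exists>i\<in>acc_list pf f' ! j. xv pw M' f' i = 0" using i L_def by blast
    qed
  qed
  have fz': "\<forall>f. M' (Some f) = Chhat pf f (M' (Some f)) \<and> (\<forall>w. pw w None (Some f) \<longrightarrow> M' (Some f) w = 0)"
    using fz fixf' zf' unfolding M' u_def L_def by auto
  have "Chhat pf f (xv pw M' f) = M' (Some f)" for f
  proof (cases "f = f'")
    case True thus ?thesis using chf' M' u_def L_def by simp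
  next
    case False
    hence eq: "M' (Some f) = M (Some f)" unfolding M' by simp
    show ?thesis
    proof (rule transfer[OF pm pm' _ eq])
      show "Chhat pf f (xv pw M f) = M (Some f)" using ch by simp
      show "\<forall>w. Aprec pw M (Some f) w < Aprec pw M' (Some f) w \<longrightarrow> M (Some f) w < Aprec pw M (Some f) w"
      proof (intro allI impI)
        fix w assume lt: "Aprec pw M (Some f) w < Aprec pw M' (Some f) w"
        hence c: "pw w (Some f) (Some f')" "ind u w - M (Some f') w > 0"
          using False unfolding M' Aprec_upd u_def L_def by (auto split: if_splits)
        hence "w \<in> u" using M0 by (cases "w \<in> u") (auto simp: ind_def not_less[symmetric])
        hence "0 < M (Some f') w" using pos tk by force
        thus "M (Some f) w < Aprec pw M (Some f) w" using Aprec_ge2[OF pm, of "Some f'" "Some f" pw w] c False by simp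
      qed
    qed
  qed
  thus ?thesis unfolding stable_iff using pm' fz' by simp
qed

theorem lemma3:
  fixes pw :: "'w::finite \<Rightarrow> 'f::finite option \<Rightarrow> 'f option \<Rightarrow> bool"
    and pf :: "'f \<Rightarrow> 'w set \<Rightarrow> 'w set \<Rightarrow> bool"
    and M M' :: "'f option \<Rightarrow> 'w \<Rightarrow> real"
  assumes "\<forall>w. strict_lin (pw w)"
    and "\<forall>f. strict_lin (pf f)"
    and "stable pw pf M"
    and "type1 pf M M' \<or> type2 pf M M' \<or> type3 M M'"
  shows "stable pw pf M'"
  using assms(3,4) type1_ok type2_ok type3_ok by blast

end
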